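(* If the system $\dot{z}(t) = A_{-1}\dot{z}(t-1)+L z_t+Bu$, $t\ge 0$, is exactly controllable at time $T$, then for any matrix $P\in\mathbb{C}^{r\times n}$ the perturbed system $$\dot z(t) = (A_{-1}+BP)\dot z(t-1) + L z_t + Bu$$ is exactly controllable at the same time $T$.
   Context: Consider the neutral type time-delay system $\dot{z}(t) = A_{-1}\dot{z}(t-1)+L z_t+Bu$, $t\ge 0$, where $A_{-1}\in\mathbb{R}^{n\times n}$, $B\in\mathbb{R}^{n\times r}$ are constant matrices, $z_t:[-1,0]\to\mathbb{C}^n$ is the history $z_t(s)=z(t+s)$, and the delay operator is $L f=\int_{-1}^0 A_2(\theta)\frac{\mathrm{d}}{\mathrm{d}\theta}f(\theta)\,\mathrm{d}\theta+\int_{-1}^0 A_3(\theta)f(\theta)\,\mathrm{d}\theta$, with $A_2,A_3$ $n\times n$ matrices whose entries belong to $L_2([-1,0],\mathbb{C})$. The system is said to be exactly controllable at time $T$ if for every $f\in H^1(T-1,T;\mathbb{C}^n)$ there exists a control $u\in L_2(0,T;\mathbb{C}^r)$ such that the solution with zero initial condition $z(t)=0$, $t\in[-1,0]$, satisfies $z(t)=f(t)$ for $t\in[T-1,T]$ (equivalently, the reachability set from $0$ at time $T$ of the associated operator model on $M_2=\mathbb{C}^n\times L_2(-1,0;\mathbb{C}^n)$ equals the domain $\mathcal{D}(\mathcal{A})$ of the system operator). *)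

theory Defs
  imports "HOL-Analysis.Analysis"
begin

definition L2_on :: "real set \<Rightarrow> (real \<Rightarrow> 'a::{banach,second_countable_topology}) \<Rightarrow> bool" where
  "L2_on S f \<longleftrightarrow> set_borel_measurable lborel S f \<and>
     set_integrable lborel S (\<lambda>t. (norm (f t))^2)"

definition H1_with_deriv :: "real \<Rightarrow> real \<Rightarrow> (real \<Rightarrow> 'a::euclidean_space) \<Rightarrow> (real \<Rightarrow> 'a) \<Rightarrow> bool" where
  "H1_with_deriv a b z g \<longleftrightarrow> L2_on {a..b} g \<and>
     (\<forall>t\<in>{a..b}. z t = z a + (LINT s:{a..t}|lborel. g s))"

definition H1_on :: "real \<Rightarrow> real \<Rightarrow> (real \<Rightarrow> 'a::euclidean_space) \<Rightarrow> bool" where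
  "H1_on a b z \<longleftrightarrow> (\<exists>g. H1_with_deriv a b z g)"

definition cmat :: "real^'m^'k \<Rightarrow> complex^'m^'k" where
  "cmat M = (\<chi> i j. complex_of_real (M $ i $ j))"

definition neutral_solution ::
  "complex^'n^'n \<Rightarrow> (real \<Rightarrow> complex^'n^'n) \<Rightarrow> (real \<Rightarrow> complex^'n^'n) \<Rightarrow> complex^'r^'n
   \<Rightarrow> real \<Rightarrow> (real \<Rightarrow> complex^'r) \<Rightarrow> (real \<Rightarrow> complex^'n) \<Rightarrow> bool" where
  "neutral_solution Am1 A2 A3 B T u z \<longleftrightarrow>
     (\<forall>t\<in>{-1..0}. z t = 0) \<and>
     (\<exists>g. H1_with_deriv (-1) T z g \<and>
        (AE t in lborel. t \<in> {0..T} \<longrightarrow>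
           g t = Am1 *v g (t - 1)
               + (LINT \<theta>:{-1..0}|lborel. A2 \<theta> *v g (t + \<theta>))
               + (LINT \<theta>:{-1..0}|lborel. A3 \<theta> *v z (t + \<theta>))
               + B *v u t))"

definition exactly_controllable ::
  "complex^'n^'n \<Rightarrow> (real \<Rightarrow> complex^'n^'n) \<Rightarrow> (real \<Rightarrow> complex^'n^'n) \<Rightarrow> complex^'r^'n
   \<Rightarrow> real \<Rightarrow> bool" where
  "exactly_controllable Am1 A2 A3 B T \<longleftrightarrow>
     (\<forall>f::real \<Rightarrow> complex^'n. H1_on (T - 1) T f \<longrightarrow>
        (\<exists>u::real \<Rightarrow> complex^'r. L2_on {0..T} u \<and>
           (\<exists>z. neutral_solution Am1 A2 A3 B T u z \<and> (\<forall>t\<in>{T-1..T}. z t = f t))))"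

end

theory Submission
  imports Defs
begin

lemma L2_lin:
  fixes M :: "complex^'n^'m" and g :: "real \<Rightarrow> complex^'n"
  assumes "L2_on S g"
  shows "L2_on S (\<lambda>t. M *v g t)"
proof -
  have bl: "bounded_linear ((*v) M)" by simp
  then obtain K where K: "\<And>x. norm (M *v x) \<le> norm x * K" and Kp: "K > 0"
    using bounded_linear.pos_bounded by blast
  have m: "(\<lambda>x. indicator S x *\<^sub>R g x) \<in> borel_measurable lborel"
    using assms unfolding L2_on_def set_borel_measurable_def by blast
  have i: "integrable lborel (\<lambda>x. indicator S x *\<^sub>R (norm (g x))^2)"
    using assms unfolding L2_on_def set_integrable_def by blast
  have eq: "(\<lambda>x. indicator S x *\<^sub>R (M *v g x)) = (\<lambda>x. M *v (indicator S x *\<^sub>R g x))"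
    using bl by (simp add: linear_simps bounded_linear.linear)
  have m2: "(\<lambda>x. indicator S x *\<^sub>R (M *v g x)) \<in> borel_measurable lborel"
    unfolding eq
    by (rule measurable_compose[OF m]) (intro borel_measurable_continuous_onI linear_continuous_on bl)
  have eq2: "(\<lambda>x. indicator S x *\<^sub>R (norm (M *v g x))^2) = (\<lambda>x. (norm (indicator S x *\<^sub>R (M *v g x)))^2)"
    by (auto simp: indicator_def fun_eq_iff)
  have "integrable lborel (\<lambda>x. indicator S x *\<^sub>R (norm (M *v g x))^2)"
  proof (rule Bochner_Integration.integrable_bound[OF integrable_mult_right[OF i, of "K^2"]])
    show "(\<lambda>x. indicator S x *\<^sub>R (norm (M *v g x))^2) \<in> borel_measurable lborel"
      unfolding eq2 using m2 by measurable
    show "AE x in lborel. norm (indicator S x *\<^sub>R (norm (M *v g x))^2)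
        \<le> norm (K^2 * (indicator S x *\<^sub>R (norm (g x))^2))"
    proof (rule AE_I2)
      fix x
      have "(norm (M *v g x))^2 \<le> (norm (g x) * K)^2"
        using K[of "g x"] by (simp add: power_mono)
      then show "norm (indicator S x *\<^sub>R (norm (M *v g x))^2)
        \<le> norm (K^2 * (indicator S x *\<^sub>R (norm (g x))^2))"
        by (auto simp: indicator_def power_mult_distrib mult.commute)
    qed
  qed
  then show ?thesis using m2 unfolding L2_on_def set_borel_measurable_def set_integrable_def by blast
qed

lemma L2_diff:
  fixes u v :: "real \<Rightarrow> complex^'n"
  assumes "L2_on S u" "L2_on S v"
  shows "L2_on S (\<lambda>t. u t - v t)"
proof -
  have mu: "(\<lambda>x. indicator S x *\<^sub>R u x) \<in> borel_measurable lborel"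
   and mv: "(\<lambda>x. indicator S x *\<^sub>R v x) \<in> borel_measurable lborel"
    using assms unfolding L2_on_def set_borel_measurable_def by blast+
  have iu: "integrable lborel (\<lambda>x. indicator S x *\<^sub>R (norm (u x))^2)"
   and iv: "integrable lborel (\<lambda>x. indicator S x *\<^sub>R (norm (v x))^2)"
    using assms unfolding L2_on_def set_integrable_def by blast+
  have eq: "(\<lambda>x. indicator S x *\<^sub>R (u x - v x)) = (\<lambda>x. indicator S x *\<^sub>R u x - indicator S x *\<^sub>R v x)"
    by (simp add: scaleR_diff_right)
  have m2: "(\<lambda>x. indicator S x *\<^sub>R (u x - v x)) \<in> borel_measurable lborel"
    unfolding eq using mu mv by measurable
  have eq2: "(\<lambda>x. indicator S x *\<^sub>R (norm (u x - v x))^2) = (\<lambda>x. (norm (indicator S x *\<^sub>R (u x - v x)))^2)"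
    by (auto simp: indicator_def fun_eq_iff)
  have "integrable lborel (\<lambda>x. indicator S x *\<^sub>R (norm (u x - v x))^2)"
  proof (rule Bochner_Integration.integrable_bound[OF Bochner_Integration.integrable_add[OF integrable_mult_right[OF iu, of 2] integrable_mult_right[OF iv, of 2]]])
    show "(\<lambda>x. indicator S x *\<^sub>R (norm (u x - v x))^2) \<in> borel_measurable lborel"
      unfolding eq2 using m2 by measurable
    show "AE x in lborel. norm (indicator S x *\<^sub>R (norm (u x - v x))^2)
        \<le> norm (2 * (indicator S x *\<^sub>R (norm (u x))^2) + 2 * (indicator S x *\<^sub>R (norm (v x))^2))"
    proof (rule AE_I2)
      fix x
      have "norm (u x - v x) \<le> norm (u x) + norm (v x)" by (rule norm_triangle_ineq4)
      hence "(norm (u x - v x))^2 \<le> (norm (u x) + norm (v x))^2" by (simp add: power_mono)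
      also have "\<dots> \<le> 2 * (norm (u x))^2 + 2 * (norm (v x))^2"
      proof -
        have "0 \<le> (norm (u x) - norm (v x))^2" by simp
        then show ?thesis unfolding power2_sum power2_diff by linarith
      qed
      finally show "norm (indicator S x *\<^sub>R (norm (u x - v x))^2)
        \<le> norm (2 * (indicator S x *\<^sub>R (norm (u x))^2) + 2 * (indicator S x *\<^sub>R (norm (v x))^2))"
        by (auto simp: indicator_def)
    qed
  qed
  then show ?thesis using m2 unfolding L2_on_def set_borel_measurable_def set_integrable_def by blast
qed

lemma L2_mono:
  fixes g :: "real \<Rightarrow> complex^'n"
  assumes "L2_on A g" "B \<subseteq> A" "B \<in> sets lborel"
  shows "L2_on B g"
proof -
  have m: "(\<lambda>x. indicator A x *\<^sub>R g x) \<in> borel_measurable lborel"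
    using assms unfolding L2_on_def set_borel_measurable_def by blast
  have eq: "(\<lambda>x. indicator B x *\<^sub>R g x) = (\<lambda>x. indicator B x *\<^sub>R (indicator A x *\<^sub>R g x))"
    using assms(2) by (auto simp: indicator_def fun_eq_iff)
  have "(\<lambda>x. indicator B x *\<^sub>R g x) \<in> borel_measurable lborel"
    unfolding eq using m assms(3) by measurable
  moreover have "set_integrable lborel B (\<lambda>t. (norm (g t))^2)"
    using set_integrable_subset[of lborel A "\<lambda>t. (norm (g t))^2" B] assms unfolding L2_on_def by blast
  ultimately show ?thesis unfolding L2_on_def set_borel_measurable_def by blast
qed

lemma L2_shift:
  fixes g :: "real \<Rightarrow> complex^'n"
  assumes "L2_on {a..b} g"
  shows "L2_on {a+1..b+1} (\<lambda>t. g (t - 1))"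
proof -
  have m: "(\<lambda>x. indicator {a..b} x *\<^sub>R g x) \<in> borel_measurable lborel"
    using assms unfolding L2_on_def set_borel_measurable_def by blast
  have i: "integrable lborel (\<lambda>x. indicator {a..b} x *\<^sub>R (norm (g x))^2)"
    using assms unfolding L2_on_def set_integrable_def by blast
  have ind: "\<And>x. indicator {a+1..b+1} x = (indicator {a..b} (x - 1) :: real)"
    by (auto simp: indicator_def)
  have m1: "(\<lambda>x. indicator {a..b} (x - 1) *\<^sub>R g (x - 1)) \<in> borel_measurable lborel"
    using measurable_compose[OF _ m, of "\<lambda>x. x - 1" lborel] by simp
  have i1: "integrable lborel (\<lambda>x. indicator {a..b} (x - 1) *\<^sub>R (norm (g (x - 1)))^2)"
    using lborel_integrable_real_affine[OF i, of 1 "-1"] by simp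
  have e1: "(\<lambda>x. indicator {a+1..b+1} x *\<^sub>R g (x - 1)) = (\<lambda>x. indicator {a..b} (x - 1) *\<^sub>R g (x - 1))"
    by (simp only: ind)
  have e2: "(\<lambda>x. indicator {a+1..b+1} x *\<^sub>R (norm (g (x - 1)))^2) = (\<lambda>x. indicator {a..b} (x - 1) *\<^sub>R (norm (g (x - 1)))^2)"
    by (simp only: ind)
  show ?thesis unfolding L2_on_def set_borel_measurable_def set_integrable_def e1 e2 using m1 i1 by blast
qed

theorem lemma1:
  fixes Am1 :: "real^'n^'n" and B :: "real^'r^'n"
    and A2 A3 :: "real \<Rightarrow> complex^'n^'n" and T :: real
    and P :: "complex^'n^'r"
  assumes "\<forall>i j. L2_on {-1..0} (\<lambda>\<theta>. A2 \<theta> $ i $ j)"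
    and "\<forall>i j. L2_on {-1..0} (\<lambda>\<theta>. A3 \<theta> $ i $ j)"
    and "exactly_controllable (cmat Am1) A2 A3 (cmat B) T"
  shows "exactly_controllable (cmat Am1 + cmat B ** P) A2 A3 (cmat B) T"
  unfolding exactly_controllable_def
proof (intro allI impI)
  fix f :: "real \<Rightarrow> complex^'n"
  assume "H1_on (T - 1) T f"
  then obtain u z where u: "L2_on {0..T} u" and ns: "neutral_solution (cmat Am1) A2 A3 (cmat B) T u z"
    and zf: "\<forall>t\<in>{T-1..T}. z t = f t"
    using assms(3) unfolding exactly_controllable_def by blast
  from ns obtain g where z0: "\<forall>t\<in>{-1..0}. z t = 0" and hg: "H1_with_deriv (-1) T z g"
    and ae: "AE t in lborel. t \<in> {0..T} \<longrightarrow>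
           g t = cmat Am1 *v g (t - 1)
               + (LINT \<theta>:{-1..0}|lborel. A2 \<theta> *v g (t + \<theta>))
               + (LINT \<theta>:{-1..0}|lborel. A3 \<theta> *v z (t + \<theta>))
               + cmat B *v u t"
    unfolding neutral_solution_def by blast
  define u' where "u' = (\<lambda>t. u t - P *v g (t - 1))"
  have gL: "L2_on {-1..T} g" using hg unfolding H1_with_deriv_def by blast
  have "L2_on {-1..T-1} g" by (rule L2_mono[OF gL]) auto
  from L2_shift[OF this] have "L2_on {0..T} (\<lambda>t. g (t - 1))" by simp
  from L2_lin[OF this, of P] have "L2_on {0..T} (\<lambda>t. P *v g (t - 1))" .
  from L2_diff[OF u this] have u': "L2_on {0..T} u'" unfolding u'_def .
  have "neutral_solution (cmat Am1 + cmat B ** P) A2 A3 (cmat B) T u' z"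
    unfolding neutral_solution_def
  proof (intro conjI exI[of _ g])
    show "\<forall>t\<in>{-1..0}. z t = 0" by (rule z0)
    show "H1_with_deriv (-1) T z g" by (rule hg)
    show "AE t in lborel. t \<in> {0..T} \<longrightarrow>
           g t = (cmat Am1 + cmat B ** P) *v g (t - 1)
               + (LINT \<theta>:{-1..0}|lborel. A2 \<theta> *v g (t + \<theta>))
               + (LINT \<theta>:{-1..0}|lborel. A3 \<theta> *v z (t + \<theta>))
               + cmat B *v u' t"
    proof -
      have key: "(cmat Am1 + cmat B ** P) *v g (t - 1) + cmat B *v u' t
          = cmat Am1 *v g (t - 1) + cmat B *v u t" for t
      proof -
        have "(cmat Am1 + cmat B ** P) *v g (t - 1) = cmat Am1 *v g (t - 1) + cmat B *v (P *v g (t - 1))"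
          by (simp only: matrix_vector_mult_add_rdistrib matrix_vector_mul_assoc)
        moreover have "cmat B *v u' t = cmat B *v u t - cmat B *v (P *v g (t - 1))"
          unfolding u'_def by (rule matrix_vector_mult_diff_distrib)
        ultimately show ?thesis by simp
      qed
      show ?thesis using ae
        by (rule AE_mp, intro AE_I2 impI) (metis (no_types, lifting) key add.commute add.left_commute)
    qed
  qed
  then show "\<exists>u. L2_on {0..T} u \<and>
           (\<exists>z. neutral_solution (cmat Am1 + cmat B ** P) A2 A3 (cmat B) T u z \<and>
                (\<forall>t\<in>{T - 1..T}. z t = f t))"
    using u' zf by blast
qed

end
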